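(* Let $p$ be a prime and $\alpha$ a positive integer. For $l\in\mathbb{N}$, $n\in\mathbb{N}$, $r\in\mathbb{Z}$ let $$T_l(n,r)=\frac{l!\,p^l}{\lfloor n/p^{\alpha-1}\rfloor!}\sum_{k\equiv r\ (\mathrm{mod}\ p^{\alpha})}\binom nk(-1)^k\binom{(k-r)/p^{\alpha}}l.$$ Let $l\in\mathbb{N}$, $n\in\mathbb{Z}^+$ and $r\in\mathbb{Z}$. Then $$T_l(n-1,r)-T_l(n-1,r-1)=\begin{cases}T_l(n,r)&\text{if } p^{\alpha-1}\nmid n,\\ \frac n{p^{\alpha-1}}T_l(n,r)&\text{otherwise}.\end{cases}$$ If $l>0$, then also $$T_l(n,r)+\frac r{p^{\alpha-1}}T_{l-1}(n,r+p^{\alpha})=\begin{cases}-T_{l-1}(n-1,r+p^{\alpha}-1)&\text{if } p^{\alpha-1}\mid n,\\ -\frac n{p^{\alpha-1}}T_{l-1}(n-1,r+p^{\alpha}-1)&\text{otherwise}.\end{cases}$$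
   Context: The sum runs over all integers $k\equiv r\pmod{p^\alpha}$ with $\binom nk=0$ unless $0\le k\le n$; $\binom xl=x(x-1)\cdots(x-l+1)/l!$. *)

theory Defs
  imports Complex_Main "HOL-Number_Theory.Cong"
begin

text \<open>T_l(n,r) for prime p and exponent alpha; the sum ranges over 0 \<le> k \<le> n with
  k congruent to r mod p^alpha (other binomials vanish). The quotient (k-r)/p^alpha is an
  integer, computed exactly with div.\<close>
definition T :: "nat \<Rightarrow> nat \<Rightarrow> nat \<Rightarrow> nat \<Rightarrow> int \<Rightarrow> real" where
  "T p \<alpha> l n r =
     (fact l * real p ^ l / fact (n div p ^ (\<alpha> - 1))) *
     (\<Sum>k\<in>{k\<in>{0..n}. [int k = r] (mod int p ^ \<alpha>)}.
        real (n choose k) * (-1) ^ k * (real_of_int ((int k - r) div int p ^ \<alpha>) gchoose l))"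

end

theory Submission
  imports Defs
begin

definition GG :: "nat \<Rightarrow> nat \<Rightarrow> nat \<Rightarrow> int \<Rightarrow> nat \<Rightarrow> real" where
  "GG p \<alpha> l r k = (if [int k = r] (mod int p ^ \<alpha>) then
      real_of_int ((int k - r) div int p ^ \<alpha>) gchoose l else 0)"

definition SS :: "nat \<Rightarrow> nat \<Rightarrow> nat \<Rightarrow> nat \<Rightarrow> int \<Rightarrow> real" where
  "SS p \<alpha> l n r = (\<Sum>k\<le>n. real (n choose k) * (-1) ^ k * GG p \<alpha> l r k)"

lemma T_SS: "T p \<alpha> l n r = fact l * real p ^ l / fact (n div p ^ (\<alpha> - 1)) * SS p \<alpha> l n r"
proof -
  have "(\<Sum>k\<in>{k\<in>{0..n}. [int k = r] (mod int p ^ \<alpha>)}.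
        real (n choose k) * (-1) ^ k * (real_of_int ((int k - r) div int p ^ \<alpha>) gchoose l))
      = SS p \<alpha> l n r"
    unfolding SS_def GG_def
    by (subst sum.inter_filter) (auto simp: atLeast0AtMost intro!: sum.cong)
  then show ?thesis unfolding T_def by simp
qed

lemma pascal_sum:
  fixes a :: "nat \<Rightarrow> real"
  shows "(\<Sum>k\<le>Suc m. real (Suc m choose k) * (-1) ^ k * a k) =
     (\<Sum>k\<le>m. real (m choose k) * (-1) ^ k * a k) - (\<Sum>k\<le>m. real (m choose k) * (-1) ^ k * a (Suc k))"
proof -
  have "(\<Sum>k\<le>Suc m. real (Suc m choose k) * (-1) ^ k * a k) =
      a 0 + (\<Sum>k\<le>m. real (Suc m choose Suc k) * (-1) ^ Suc k * a (Suc k))"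
    by (subst sum.atMost_Suc_shift) simp
  also have "\<dots> = a 0 + (\<Sum>k\<le>m. real (m choose Suc k) * (-1) ^ Suc k * a (Suc k))
      - (\<Sum>k\<le>m. real (m choose k) * (-1) ^ k * a (Suc k))"
  proof -
    have "\<And>k. real (Suc m choose Suc k) * (-1) ^ Suc k * a (Suc k) =
       real (m choose Suc k) * (-1) ^ Suc k * a (Suc k) - real (m choose k) * (-1) ^ k * a (Suc k)"
      by (simp add: algebra_simps)
    then show ?thesis by (simp only: sum_subtractf add_diff_eq)
  qed
  also have "a 0 + (\<Sum>k\<le>m. real (m choose Suc k) * (-1) ^ Suc k * a (Suc k))
      = (\<Sum>k\<le>Suc m. real (m choose k) * (-1) ^ k * a k)"
    by (simp only: sum.atMost_Suc_shift) simp
  also have "\<dots> = (\<Sum>k\<le>m. real (m choose k) * (-1) ^ k * a k)"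
    by simp
  finally show ?thesis .
qed

lemma absorb_sum:
  fixes a :: "nat \<Rightarrow> real"
  shows "(\<Sum>k\<le>Suc m. real (Suc m choose k) * (-1) ^ k * (real k * a k)) =
     - real (Suc m) * (\<Sum>k\<le>m. real (m choose k) * (-1) ^ k * a (Suc k))"
proof -
  have "(\<Sum>k\<le>Suc m. real (Suc m choose k) * (-1) ^ k * (real k * a k)) =
      (\<Sum>k\<le>m. real (Suc m choose Suc k) * (-1) ^ Suc k * (real (Suc k) * a (Suc k)))"
    by (subst sum.atMost_Suc_shift) simp
  also have "\<dots> = (\<Sum>k\<le>m. - real (Suc m) * (real (m choose k) * (-1) ^ k * a (Suc k)))"
  proof (rule sum.cong)
    fix k assume "k \<in> {..m}"
    have "real (Suc k) * real (Suc m choose Suc k) = real (Suc m) * real (m choose k)"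
      using Suc_times_binomial[of k m] by (simp only: of_nat_mult[symmetric])
    then show "real (Suc m choose Suc k) * (-1) ^ Suc k * (real (Suc k) * a (Suc k)) =
      - real (Suc m) * (real (m choose k) * (-1) ^ k * a (Suc k))"
    proof -
      have "real (Suc m choose Suc k) * (-1) ^ Suc k * (real (Suc k) * a (Suc k))
          = - (real (Suc k) * real (Suc m choose Suc k)) * ((-1) ^ k * a (Suc k))" by simp
      also have "\<dots> = - (real (Suc m) * real (m choose k)) * ((-1) ^ k * a (Suc k))"
        by (simp only: \<open>real (Suc k) * _ = _\<close>)
      finally show ?thesis by (simp only: mult_minus_left mult.assoc)
    qed
  qed simp
  also have "\<dots> = - real (Suc m) * (\<Sum>k\<le>m. real (m choose k) * (-1) ^ k * a (Suc k))"
    by (simp add: sum_distrib_left)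
  finally show ?thesis .
qed

lemma GG_shift: "GG p \<alpha> l r (Suc k) = GG p \<alpha> l (r - 1) k"
proof -
  have "[int (Suc k) = r] (mod int p ^ \<alpha>) \<longleftrightarrow> [int k = r - 1] (mod int p ^ \<alpha>)"
    by (simp add: cong_iff_dvd_diff algebra_simps)
  moreover have "int (Suc k) - r = int k - (r - 1)" by simp
  ultimately show ?thesis unfolding GG_def by (simp only:)
qed

lemma GG_absorb:
  assumes "p > 0"
  shows "real_of_int (int p ^ \<alpha>) * real (Suc j) * GG p \<alpha> (Suc j) r k
     = (real k - real_of_int r) * GG p \<alpha> j (r + int p ^ \<alpha>) k"
proof (cases "[int k = r] (mod int p ^ \<alpha>)")
  case True
  define q where "q = int p ^ \<alpha>"
  have q0: "q > 0" using assms by (simp add: q_def)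
  have c2: "[int k = r + q] (mod q)"
  proof -
    have "q dvd (int k - r) - q" using True unfolding q_def by (simp add: cong_iff_dvd_diff)
    then show ?thesis by (simp add: cong_iff_dvd_diff algebra_simps)
  qed
  have dv: "q dvd (int k - r)" using True unfolding q_def by (simp add: cong_iff_dvd_diff)
  then obtain x where x: "int k - r = q * x" by blast
  have d1: "(int k - r) div q = x" using x q0 by simp
  have "int k - (r + q) = q * (x - 1)" using x by (simp add: algebra_simps)
  then have d2: "(int k - (r + q)) div q = x - 1" using q0 by simp
  have "real (Suc j) * (real_of_int x gchoose Suc j) = real_of_int x * ((real_of_int x - 1) gchoose j)"
    by (rule gbinomial_absorption)
  moreover have "real k - real_of_int r = real_of_int q * real_of_int x"
    using arg_cong[OF x, of real_of_int] by simp
  moreover have "GG p \<alpha> (Suc j) r k = real_of_int x gchoose Suc j"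
    using True d1 unfolding GG_def q_def by simp
  moreover have "GG p \<alpha> j (r + int p ^ \<alpha>) k = (real_of_int x - 1) gchoose j"
    using c2 d2 unfolding GG_def q_def by simp
  ultimately show ?thesis unfolding q_def[symmetric]
    by (metis mult.assoc)
next
  case False
  have "\<not> [int k = r + int p ^ \<alpha>] (mod int p ^ \<alpha>)"
  proof
    assume "[int k = r + int p ^ \<alpha>] (mod int p ^ \<alpha>)"
    then have "int p ^ \<alpha> dvd (int k - (r + int p ^ \<alpha>))"
      by (simp only: cong_iff_dvd_diff)
    then have "int p ^ \<alpha> dvd (int k - (r + int p ^ \<alpha>)) + int p ^ \<alpha>"
      using dvd_add dvd_refl by blast
    moreover have "(int k - (r + int p ^ \<alpha>)) + int p ^ \<alpha> = int k - r" by simp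
    ultimately have "int p ^ \<alpha> dvd int k - r" by metis
    then show False using False by (simp add: cong_iff_dvd_diff)
  qed
  then show ?thesis using False unfolding GG_def by simp
qed

lemma SS_pascal: "SS p \<alpha> l (Suc n) r = SS p \<alpha> l n r - SS p \<alpha> l n (r - 1)"
  unfolding SS_def using pascal_sum[of n "GG p \<alpha> l r"] by (simp add: GG_shift)

lemma SS_absorb:
  assumes "p > 0"
  shows "real_of_int (int p ^ \<alpha>) * real (Suc j) * SS p \<alpha> (Suc j) (Suc n) r =
    - real (Suc n) * SS p \<alpha> j n (r + int p ^ \<alpha> - 1) - real_of_int r * SS p \<alpha> j (Suc n) (r + int p ^ \<alpha>)"
proof -
  let ?G = "GG p \<alpha> j (r + int p ^ \<alpha>)"
  have "real_of_int (int p ^ \<alpha>) * real (Suc j) * SS p \<alpha> (Suc j) (Suc n) r =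
     (\<Sum>k\<le>Suc n. real (Suc n choose k) * (-1) ^ k * (real_of_int (int p ^ \<alpha>) * real (Suc j) * GG p \<alpha> (Suc j) r k))"
    unfolding SS_def by (simp add: sum_distrib_left algebra_simps)
  also have "\<dots> = (\<Sum>k\<le>Suc n. real (Suc n choose k) * (-1) ^ k * ((real k - real_of_int r) * ?G k))"
    using GG_absorb[OF assms] by simp
  also have "\<dots> = (\<Sum>k\<le>Suc n. real (Suc n choose k) * (-1) ^ k * (real k * ?G k))
       - real_of_int r * (\<Sum>k\<le>Suc n. real (Suc n choose k) * (-1) ^ k * ?G k)"
    by (simp add: sum_distrib_left sum_subtractf algebra_simps)
  also have "(\<Sum>k\<le>Suc n. real (Suc n choose k) * (-1) ^ k * (real k * ?G k))
      = - real (Suc n) * (\<Sum>k\<le>n. real (n choose k) * (-1) ^ k * ?G (Suc k))"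
    by (rule absorb_sum)
  also have "(\<Sum>k\<le>n. real (n choose k) * (-1) ^ k * ?G (Suc k)) = SS p \<alpha> j n (r + int p ^ \<alpha> - 1)"
    unfolding SS_def by (simp add: GG_shift)
  finally show ?thesis unfolding SS_def by simp
qed

lemma div_step:
  assumes "m > 0"
  shows "Suc n div m = (if m dvd Suc n then Suc (n div m) else n div m)"
  using div_Suc[of n m] by (simp add: dvd_eq_mod_eq_0)

theorem lemma2p2:
  fixes p \<alpha> l n :: nat and r :: int
  assumes "prime p" and "\<alpha> > 0" and "n > 0"
  shows "(T p \<alpha> l (n - 1) r - T p \<alpha> l (n - 1) (r - 1) =
           (if \<not> p ^ (\<alpha> - 1) dvd n then T p \<alpha> l n r
            else real n / real (p ^ (\<alpha> - 1)) * T p \<alpha> l n r)) \<and>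
         (l > 0 \<longrightarrow> 
         T p \<alpha> l n r + real_of_int r / real (p ^ (\<alpha> - 1)) * T p \<alpha> (l - 1) n (r + int p ^ \<alpha>) =
           (if p ^ (\<alpha> - 1) dvd n then - T p \<alpha> (l - 1) (n - 1) (r + int p ^ \<alpha> - 1)
            else - (real n / real (p ^ (\<alpha> - 1))) * T p \<alpha> (l - 1) (n - 1) (r + int p ^ \<alpha> - 1)))"
proof -
  have p0: "p > 0" using assms(1) prime_gt_0_nat by blast
  define m where "m = p ^ (\<alpha> - 1)"
  have m0: "m > 0" using p0 by (simp add: m_def)
  have qm: "real_of_int (int p ^ \<alpha>) = real p * real m"
  proof -
    obtain a where a: "\<alpha> = Suc a" using assms(2) gr0_implies_Suc by blast
    have "real (p ^ \<alpha>) = real (p * m)" unfolding m_def a by simp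
    then show ?thesis by simp
  qed
  obtain n' where nn: "n = Suc n'" using assms(3) by (metis gr0_implies_Suc)
  define F where "F = (fact (n div m) :: real)"
  define F' where "F' = (fact (n' div m) :: real)"
  have F0: "F > 0" "F' > 0" unfolding F_def F'_def by auto
  have Fd: "m dvd n \<Longrightarrow> F = (real n / real m) * F'"
  proof -
    assume d: "m dvd n"
    have "n div m = Suc (n' div m)" using div_step[OF m0, of n'] d nn by simp
    moreover have "real (n div m) = real n / real m" using d by (simp add: real_of_nat_div)
    ultimately show ?thesis unfolding F_def F'_def by (metis fact_Suc of_nat_fact)
  qed
  have Fn: "\<not> m dvd n \<Longrightarrow> F = F'"
    using div_step[OF m0, of n'] nn unfolding F_def F'_def by simp
  have part1: "T p \<alpha> l n' r - T p \<alpha> l n' (r - 1) = fact l * real p ^ l / F' * SS p \<alpha> l n r"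
    unfolding T_SS F'_def m_def[symmetric] nn SS_pascal by (simp add: algebra_simps diff_divide_distrib)
  have part2: "l > 0 \<Longrightarrow> T p \<alpha> l n r + real_of_int r / real m * T p \<alpha> (l - 1) n (r + int p ^ \<alpha>)
     = - (real n / real m) * (fact (l - 1) * real p ^ (l - 1) / F * SS p \<alpha> (l - 1) n' (r + int p ^ \<alpha> - 1))"
  proof -
    assume "l > 0"
    then obtain j where j: "l = Suc j" by (metis gr0_implies_Suc)
    have key: "real_of_int (int p ^ \<alpha>) * real (Suc j) * SS p \<alpha> (Suc j) n r =
      - real n * SS p \<alpha> j n' (r + int p ^ \<alpha> - 1) - real_of_int r * SS p \<alpha> j n (r + int p ^ \<alpha>)"
      using SS_absorb[OF p0, where j=j and n=n' and r=r] nn by simp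
    then have key': "real p * real (Suc j) * SS p \<alpha> (Suc j) n r =
      (- real n * SS p \<alpha> j n' (r + int p ^ \<alpha> - 1) - real_of_int r * SS p \<alpha> j n (r + int p ^ \<alpha>)) / real m"
      unfolding qm using m0 by (simp add: field_simps)
    have "T p \<alpha> l n r + real_of_int r / real m * T p \<alpha> (l - 1) n (r + int p ^ \<alpha>)
      = fact j * real p ^ j / F * (real p * real (Suc j) * SS p \<alpha> (Suc j) n r
          + real_of_int r / real m * SS p \<alpha> j n (r + int p ^ \<alpha>))"
      unfolding T_SS j F_def m_def[symmetric] by (simp add: algebra_simps add_divide_distrib)
    also have "\<dots> = fact j * real p ^ j / F * (- real n * SS p \<alpha> j n' (r + int p ^ \<alpha> - 1) / real m)"
      unfolding key' using m0 by (simp add: field_simps)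
    finally show ?thesis unfolding j by (simp add: ac_simps)
  qed
  have n1: "n - 1 = n'" using nn by simp
  have Tn: "T p \<alpha> l n r = fact l * real p ^ l / F * SS p \<alpha> l n r"
    unfolding T_SS F_def m_def by simp
  have Tn': "\<And>l r. T p \<alpha> l n' r = fact l * real p ^ l / F' * SS p \<alpha> l n' r"
    unfolding T_SS F'_def m_def by simp
  have nm0: "real n / real m \<noteq> 0" using assms(3) m0 by simp
  show ?thesis
  proof (intro conjI impI)
    show "T p \<alpha> l (n - 1) r - T p \<alpha> l (n - 1) (r - 1) =
           (if \<not> p ^ (\<alpha> - 1) dvd n then T p \<alpha> l n r
            else real n / real (p ^ (\<alpha> - 1)) * T p \<alpha> l n r)"
    proof (cases "m dvd n")
      case True
      have "T p \<alpha> l (n - 1) r - T p \<alpha> l (n - 1) (r - 1) = fact l * real p ^ l / F' * SS p \<alpha> l n r"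
        using part1 n1 by simp
      also have "\<dots> = real n / real m * (fact l * real p ^ l / F * SS p \<alpha> l n r)"
        unfolding Fd[OF True] using nm0 F0 by (simp add: field_simps)
      finally show ?thesis using True unfolding Tn m_def by simp
    next
      case False
      then show ?thesis using part1 n1 Fn Tn unfolding m_def by simp
    qed
  next
    assume l0: "l > 0"
    show "T p \<alpha> l n r + real_of_int r / real (p ^ (\<alpha> - 1)) * T p \<alpha> (l - 1) n (r + int p ^ \<alpha>) =
           (if p ^ (\<alpha> - 1) dvd n then - T p \<alpha> (l - 1) (n - 1) (r + int p ^ \<alpha> - 1)
            else - (real n / real (p ^ (\<alpha> - 1))) * T p \<alpha> (l - 1) (n - 1) (r + int p ^ \<alpha> - 1))"
    proof (cases "m dvd n")
      case True
      have "- (real n / real m) * (fact (l - 1) * real p ^ (l - 1) / F * SS p \<alpha> (l - 1) n' (r + int p ^ \<alpha> - 1))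
         = - T p \<alpha> (l - 1) n' (r + int p ^ \<alpha> - 1)"
        unfolding Tn' Fd[OF True] using nm0 F0 by (simp add: field_simps)
      then show ?thesis using part2[OF l0] True n1 unfolding m_def by simp
    next
      case False
      have "- (real n / real m) * (fact (l - 1) * real p ^ (l - 1) / F * SS p \<alpha> (l - 1) n' (r + int p ^ \<alpha> - 1))
         = - (real n / real m) * T p \<alpha> (l - 1) n' (r + int p ^ \<alpha> - 1)"
        unfolding Tn' Fn[OF False] by simp
      then show ?thesis using part2[OF l0] False n1 unfolding m_def by simp
    qed
  qed
qed

end
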